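(* Let $n>8$ and let $M_n$ be the maximum of $av_1(T)$ over all trees $T$ with $n$ vertices. Then $M_n=\frac n2+\delta_n$ with $0<\delta_n<\frac12$. Moreover, $\lim_{n\to\infty}\big(M_n-\frac{n+1}{2}\big)=0$, as witnessed by the trees $R_n$ obtained from the star $S_{n-1}$ by attaching a new vertex to one of its leaves, which satisfy $\frac n2<av_1(R_n)<\frac{n+1}2$ and $av_1(R_n)-\frac{n+1}{2}\to 0$.
   Context: For a graph $G=(V,E)$, a set $S\subseteq V$ is a $1$-nearly independent vertex set if the subgraph induced by $S$ has exactly one edge. $\sigma_1(G)$ is the number of such sets, $S_1(G)$ the sum of their sizes, and $av_1(G)=S_1(G)/\sigma_1(G)$. $S_m$ denotes the star on $m$ vertices. *)

theory Defs
  imports Complex_Main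
begin

definition simple_graph :: "'a set \<Rightarrow> 'a set set \<Rightarrow> bool" where
  "simple_graph V E \<longleftrightarrow> finite V \<and> (\<forall>e\<in>E. e \<subseteq> V \<and> card e = 2)"

definition adj :: "'a set set \<Rightarrow> 'a \<Rightarrow> 'a \<Rightarrow> bool" where
  "adj E u v \<longleftrightarrow> {u, v} \<in> E"

definition graph_connected :: "'a set \<Rightarrow> 'a set set \<Rightarrow> bool" where
  "graph_connected V E \<longleftrightarrow> (\<forall>u\<in>V. \<forall>v\<in>V. (adj E)\<^sup>*\<^sup>* u v)"

definition is_tree :: "'a set \<Rightarrow> 'a set set \<Rightarrow> bool" where
  "is_tree V E \<longleftrightarrow> simple_graph V E \<and> V \<noteq> {} \<and> graph_connected V E \<and> card E = card V - 1"

definition induced_edges :: "'a set set \<Rightarrow> 'a set \<Rightarrow> 'a set set" where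
  "induced_edges E S = {e \<in> E. e \<subseteq> S}"

definition nis1 :: "'a set \<Rightarrow> 'a set set \<Rightarrow> 'a set set" where
  "nis1 V E = {S. S \<subseteq> V \<and> card (induced_edges E S) = 1}"

definition sigma1 :: "'a set \<Rightarrow> 'a set set \<Rightarrow> nat" where
  "sigma1 V E = card (nis1 V E)"

definition S1 :: "'a set \<Rightarrow> 'a set set \<Rightarrow> nat" where
  "S1 V E = (\<Sum>S\<in>nis1 V E. card S)"

definition av1 :: "'a set \<Rightarrow> 'a set set \<Rightarrow> real" where
  "av1 V E = real (S1 V E) / real (sigma1 V E)"

text \<open>M n: maximum of av1 over all trees on n vertices (vertex set {0..<n}; av1 is
  invariant under isomorphism, so this is the maximum over all n-vertex trees).\<close>
definition M :: "nat \<Rightarrow> real" where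
  "M n = Max (av1 {0..<n} ` {E. is_tree {0..<n} E})"

definition R_edges :: "nat \<Rightarrow> nat set set" where
  "R_edges n = {{0, i} | i. 1 \<le> i \<and> i \<le> n - 2} \<union> {{1, n - 1}}"

end

theory Submission
  imports Defs
begin


lemma ie_single: "S \<in> nis1 V E \<Longrightarrow> \<exists>e. induced_edges E S = {e}"
  unfolding nis1_def by (auto simp: card_1_singleton_iff)

lemma remove_in:
  assumes "S \<in> nis1 V E" "induced_edges E S = {e}" "w \<in> S" "w \<notin> e"
  shows "S - {w} \<in> nis1 V E"
proof -
  have "induced_edges E (S - {w}) = {e}" using assms(2-4) unfolding induced_edges_def
    by (auto simp: set_eq_iff)
  then show ?thesis using assms(1) unfolding nis1_def by auto
qed

lemma insert_notin:
  assumes fin: "finite E" and ie: "induced_edges E S = {e}" and "x \<in> S" "w \<notin> S" "{x,w} \<in> E"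
  shows "insert w S \<notin> nis1 V E"
proof
  assume "insert w S \<in> nis1 V E"
  hence c: "card (induced_edges E (insert w S)) = 1" by (simp add: nis1_def)
  have "e \<in> E" "e \<subseteq> S" using ie unfolding induced_edges_def by auto
  hence 1: "e \<in> induced_edges E (insert w S)" "{x,w} \<in> induced_edges E (insert w S)"
    using assms unfolding induced_edges_def by auto
  moreover have "e \<noteq> {x,w}" using \<open>e \<subseteq> S\<close> assms(4) by auto
  ultimately show False using c by (metis card_1_singleton_iff One_nat_def singletonD)
qed

lemma crossing:
  assumes sg: "simple_graph V E" and gc: "graph_connected V E" and "S \<subseteq> V" "x \<in> S" "y \<in> V" "y \<notin> S"
  shows "\<exists>a\<in>S. \<exists>w\<in>V-S. {a,w} \<in> E"
proof -
  have "(adj E)\<^sup>*\<^sup>* x y" using assms unfolding graph_connected_def by blast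
  then have "y \<notin> S \<Longrightarrow> \<exists>a\<in>S. \<exists>w\<in>V-S. {a,w} \<in> E"
  proof (induction rule: rtranclp_induct)
    case base then show ?case using assms by simp
  next
    case (step y z)
    show ?case
    proof (cases "y \<in> S")
      case True
      have "z \<in> V" using step.hyps(2) sg unfolding adj_def simple_graph_def by auto
      then show ?thesis using True step by (auto simp: adj_def)
    next
      case False then show ?thesis using step.IH by blast
    qed
  qed
  then show ?thesis using assms by blast
qed

lemma finE: "simple_graph V E \<Longrightarrow> finite E"
  unfolding simple_graph_def by (meson Pow_iff finite_Pow_iff rev_finite_subset subsetI)

lemma finN: "simple_graph V E \<Longrightarrow> finite (nis1 V E)"
  unfolding simple_graph_def nis1_def by (simp add: finite_subset[of _ "Pow V"] subset_iff)

lemma pair_ie: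
  assumes sg: "simple_graph V E" and "{a,b} \<in> E"
  shows "induced_edges E {a,b} = {{a,b}}"
proof -
  have "e = {a,b}" if "e \<in> E" "e \<subseteq> {a,b}" for e
  proof -
    have "card e = 2" "card {a,b} = 2" using sg that assms(2) unfolding simple_graph_def by auto
    then show ?thesis using that(2) by (metis card_subset_eq finite.emptyI finite.insertI)
  qed
  then show ?thesis using assms(2) unfolding induced_edges_def by auto
qed

lemma pair_in:
  assumes sg: "simple_graph V E" and "{a,b} \<in> E"
  shows "{a,b} \<in> nis1 V E"
  using pair_ie[OF assms] assms unfolding nis1_def simple_graph_def by auto


lemma special:
  assumes tr: "is_tree V E" and n4: "card V \<ge> 4" and cd: "{c,d} \<in> E" "c \<noteq> d"
    and w1: "w1 \<in> V - {c,d}" "{c,w1} \<in> E"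
  shows "\<exists>S0\<in>nis1 V E. \<exists>u1 u2. u1 \<noteq> u2 \<and> u1 \<in> V - S0 \<and> u2 \<in> V - S0
          \<and> insert u1 S0 \<notin> nis1 V E \<and> insert u2 S0 \<notin> nis1 V E"
proof -
  have sg: "simple_graph V E" and gc: "graph_connected V E" using tr unfolding is_tree_def by auto
  have fE: "finite E" using finE[OF sg] .
  have fV: "finite V" using sg unfolding simple_graph_def by auto
  have cdV: "c \<in> V" "d \<in> V" using sg cd unfolding simple_graph_def by auto
  have ie1: "induced_edges E {c,d} = {{c,d}}" using pair_ie[OF sg cd(1)] .
  show ?thesis
  proof (cases "\<exists>w2\<in>V-{c,d}. w2 \<noteq> w1 \<and> ({c,w2}\<in>E \<or> {d,w2}\<in>E)")
    case True
    then obtain w2 where w2: "w2\<in>V-{c,d}" "w2 \<noteq> w1" "{c,w2}\<in>E \<or> {d,w2}\<in>E" by blast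
    have "insert w2 {c,d} \<notin> nis1 V E"
      using w2 insert_notin[OF fE ie1, of c w2 V] insert_notin[OF fE ie1, of d w2 V] by auto
    moreover have "insert w1 {c,d} \<notin> nis1 V E"
      using w1 insert_notin[OF fE ie1, of c w1 V] by auto
    ultimately show ?thesis using pair_in[OF sg cd(1)] w1 w2 by (intro bexI[of _ "{c,d}"] exI[of _ w1] exI[of _ w2]) auto
  next
    case False
    have U: "{c,d,w1} \<subseteq> V" using cdV w1 by auto
    have "card {c,d,w1} \<le> 3" by (simp add: card_insert_le_m1)
    hence "{c,d,w1} \<noteq> V" using n4 by auto
    then obtain y where "y \<in> V" "y \<notin> {c,d,w1}" using U by blast
    then obtain x y' where xy: "x \<in> {c,d,w1}" "y' \<in> V - {c,d,w1}" "{x,y'} \<in> E"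
      using crossing[OF sg gc U, of c y] by auto
    have "x = w1" using False xy by (auto simp: insert_commute)
    have ie2: "induced_edges E {c,w1} = {{c,w1}}" using pair_ie[OF sg w1(2)] .
    have "insert d {c,w1} \<notin> nis1 V E"
      using insert_notin[OF fE ie2, of c d V] cd w1 by auto
    moreover have "insert y' {c,w1} \<notin> nis1 V E"
      using insert_notin[OF fE ie2, of w1 y' V] xy \<open>x = w1\<close> by auto
    moreover have "d \<noteq> y'" using xy by auto
    ultimately show ?thesis using pair_in[OF sg w1(2)] w1 xy cdV cd by (intro bexI[of _ "{c,w1}"] exI[of _ d] exI[of _ y']) auto
  qed
qed


lemma exists_special:
  assumes tr: "is_tree V E" and n4: "card V \<ge> 4"
  shows "\<exists>S0\<in>nis1 V E. \<exists>u1 u2. u1 \<noteq> u2 \<and> u1 \<in> V - S0 \<and> u2 \<in> V - S0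
          \<and> insert u1 S0 \<notin> nis1 V E \<and> insert u2 S0 \<notin> nis1 V E"
proof -
  have sg: "simple_graph V E" and gc: "graph_connected V E" and cE: "card E = card V - 1"
    using tr unfolding is_tree_def by auto
  have "E \<noteq> {}" using cE n4 by auto
  then obtain e where e: "e \<in> E" by blast
  hence "card e = 2" "e \<subseteq> V" using sg unfolding simple_graph_def by auto
  then obtain a b where ab: "a \<noteq> b" "e = {a,b}" by (meson card_2_iff)
  have abV: "{a,b} \<subseteq> V" using ab \<open>e \<subseteq> V\<close> by auto
  have "card {a,b} = 2" using ab by simp
  hence "{a,b} \<noteq> V" using n4 by auto
  then obtain y where "y \<in> V" "y \<notin> {a,b}" using abV by blast
  then obtain x w where xw: "x \<in> {a,b}" "w \<in> V - {a,b}" "{x,w} \<in> E"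
    using crossing[OF sg gc abV, of a y] by auto
  show ?thesis
  proof (cases "x = a")
    case True
    then have p: "{a,b} \<in> E" "a \<noteq> b" "w \<in> V - {a,b}" "{a,w} \<in> E" using xw ab e by auto
    show ?thesis using special[OF tr n4 p] .
  next
    case False
    hence "x = b" using xw by auto
    then have p: "{b,a} \<in> E" "b \<noteq> a" "w \<in> V - {b,a}" "{b,w} \<in> E" using xw ab e by (auto simp: insert_commute)
    show ?thesis using special[OF tr n4 p] .
  qed
qed

lemma main_ineq:
  assumes tr: "is_tree V E" and n4: "card V \<ge> 4"
  shows "2 * real (S1 V E) < (real (card V) + 1) * real (sigma1 V E)"
proof -
  define N where "N = nis1 V E"
  define A where "A S = {w\<in>S. S-{w}\<in>N}" for S
  define B where "B S = {w\<in>V-S. insert w S\<in>N}" for S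
  have sg: "simple_graph V E" and gc: "graph_connected V E" and cE: "card E = card V - 1"
    using tr unfolding is_tree_def by auto
  have fV: "finite V" using sg unfolding simple_graph_def by auto
  have fE: "finite E" using finE[OF sg] .
  have fN: "finite N" unfolding N_def using finN[OF sg] .
  have SV: "S \<subseteq> V" if "S \<in> N" for S using that unfolding N_def nis1_def by auto
  have fA: "finite (A S)" if "S \<in> N" for S
  proof (rule finite_subset[OF _ fV])
    show "A S \<subseteq> V" using SV[OF that] unfolding A_def by auto
  qed
  have fB: "finite (B S)" for S by (rule finite_subset[OF _ fV]) (auto simp: B_def)
  have bij: "bij_betw (\<lambda>(S,w). (S-{w}, w)) (Sigma N A) (Sigma N B)"
  proof (rule bij_betw_byWitness[where f' = "\<lambda>(S,w). (insert w S, w)"])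
    show "\<forall>a\<in>Sigma N A. (\<lambda>(S, w). (insert w S, w)) ((\<lambda>(S, w). (S - {w}, w)) a) = a"
      unfolding A_def by auto
    show "\<forall>a'\<in>Sigma N B. (\<lambda>(S, w). (S - {w}, w)) ((\<lambda>(S, w). (insert w S, w)) a') = a'"
      unfolding B_def by auto
    show "(\<lambda>(S, w). (S - {w}, w)) ` Sigma N A \<subseteq> Sigma N B"
      unfolding A_def B_def using SV by (auto simp: insert_absorb)
    show "(\<lambda>(S, w). (insert w S, w)) ` Sigma N B \<subseteq> Sigma N A"
      unfolding A_def B_def by auto
  qed
  have eqAB: "(\<Sum>S\<in>N. card (A S)) = (\<Sum>S\<in>N. card (B S))"
    using bij_betw_same_card[OF bij] fN fA fB by simp
  have ha: "real (card S) - 2 \<le> real (card (A S))" if S: "S \<in> N" for S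
  proof -
    obtain e where ie: "induced_edges E S = {e}" using ie_single[OF S[unfolded N_def]] by blast
    hence e: "e \<in> E" "e \<subseteq> S" unfolding induced_edges_def by auto
    hence ce: "card e = 2" using sg unfolding simple_graph_def by auto
    have fe: "finite e" using ce by (intro card_ge_0_finite) simp
    have fS: "finite S" using SV[OF S] fV finite_subset by blast
    have "S - e \<subseteq> A S" unfolding A_def using remove_in[OF S[unfolded N_def] ie] by (auto simp: N_def)
    hence "card (S - e) \<le> card (A S)" using fA[OF S] card_mono by blast
    moreover have "card (S - e) = card S - 2" using card_Diff_subset[OF fe e(2)] ce by simp
    moreover have "card e \<le> card S" using e(2) fS card_mono by blast
    ultimately show ?thesis using ce by linarith
  qed
  have hb: "real (card (B S)) \<le> real (card V) - real (card S) - 1" if S: "S \<in> N" for S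
  proof -
    obtain e where ie: "induced_edges E S = {e}" using ie_single[OF S[unfolded N_def]] by blast
    hence e: "e \<in> E" "e \<subseteq> S" unfolding induced_edges_def by auto
    hence ce: "card e = 2" using sg unfolding simple_graph_def by auto
    then obtain a0 b0 where "e = {a0,b0}" by (meson card_2_iff)
    then obtain x where x: "x \<in> S" using e by blast
    have "S \<noteq> V"
    proof
      assume "S = V"
      hence "induced_edges E S = E" using sg unfolding induced_edges_def simple_graph_def by auto
      hence "card E = 1" using ie by (metis card_1_singleton_iff One_nat_def)
      thus False using cE n4 by simp
    qed
    then obtain y where y: "y \<in> V" "y \<notin> S" using SV[OF S] by blast
    obtain a w where aw: "a \<in> S" "w \<in> V - S" "{a,w} \<in> E"
      using crossing[OF sg gc SV[OF S] x y] by blast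
    have "B S \<subseteq> V - S - {w}" unfolding B_def using insert_notin[OF fE ie aw(1) _ aw(3), of V] aw by (auto simp: N_def)
    hence "card (B S) \<le> card (V - S - {w})" using fV by (simp add: card_mono)
    also have "\<dots> = card V - card S - 1" using aw fV SV[OF S]
      by (simp add: card_Diff_subset finite_subset)
    finally have "card (B S) \<le> card V - card S - 1" .
    moreover have "card S + 1 \<le> card V"
    proof -
      have "insert w S \<subseteq> V" using aw SV[OF S] by auto
      hence "card (insert w S) \<le> card V" using fV card_mono by blast
      moreover have "card (insert w S) = card S + 1" using aw fV SV[OF S] finite_subset by fastforce
      ultimately show ?thesis by simp
    qed
    ultimately show ?thesis by linarith
  qed
  obtain S0 u1 u2 where S0: "S0 \<in> N" "u1 \<noteq> u2" "u1 \<in> V - S0" "u2 \<in> V - S0"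
    "insert u1 S0 \<notin> N" "insert u2 S0 \<notin> N"
    using exists_special[OF tr n4] unfolding N_def by blast
  have hc: "real (card (B S0)) < real (card V) - real (card S0) - 1"
  proof -
    have "B S0 \<subseteq> V - S0 - {u1,u2}" unfolding B_def using S0 by auto
    hence "card (B S0) \<le> card (V - S0 - {u1,u2})" using fV by (simp add: card_mono)
    also have "\<dots> = card (V - S0) - 2" using S0 fV by (simp add: card_Diff_subset)
    also have "\<dots> = card V - card S0 - 2" using fV SV[OF S0(1)] by (simp add: card_Diff_subset finite_subset)
    finally have "card (B S0) \<le> card V - card S0 - 2" .
    moreover have "card S0 + 2 \<le> card V"
    proof -
      have "S0 \<union> {u1,u2} \<subseteq> V" using S0 SV by auto
      hence "card (S0 \<union> {u1,u2}) \<le> card V" using fV card_mono by blast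
      moreover have "card (S0 \<union> {u1,u2}) = card S0 + 2" using S0 fV SV[OF S0(1)]
        by (subst card_Un_disjoint) (auto intro: finite_subset)
      ultimately show ?thesis by simp
    qed
    ultimately show ?thesis by linarith
  qed
  have s1: "(\<Sum>S\<in>N. real (card S) - 2) \<le> (\<Sum>S\<in>N. real (card (A S)))"
    by (rule sum_mono) (rule ha)
  have s2: "(\<Sum>S\<in>N. real (card (A S))) = (\<Sum>S\<in>N. real (card (B S)))"
    unfolding of_nat_sum[symmetric] eqAB ..
  have s3: "(\<Sum>S\<in>N. real (card (B S))) < (\<Sum>S\<in>N. real (card V) - real (card S) - 1)"
    by (rule sum_strict_mono_ex1[OF fN]) (use hb hc S0(1) in blast)+
  have e1: "(\<Sum>S\<in>N. real (card S) - 2) = (\<Sum>S\<in>N. real (card S)) - 2 * real (card N)"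
    by (simp add: sum_subtractf)
  have e2: "(\<Sum>S\<in>N. real (card V) - real (card S) - 1) = real (card N) * real (card V) - (\<Sum>S\<in>N. real (card S)) - real (card N)"
    by (simp add: sum_subtractf)
  have r1: "real (S1 V E) = (\<Sum>S\<in>N. real (card S))" unfolding S1_def N_def by simp
  have r2: "sigma1 V E = card N" unfolding sigma1_def N_def by simp
  have "(\<Sum>S\<in>N. real (card S)) - 2 * real (card N) < real (card N) * real (card V) - (\<Sum>S\<in>N. real (card S)) - real (card N)"
    using s1 s2 s3 e1 e2 by linarith
  then show ?thesis unfolding r1 r2 by (simp add: algebra_simps)
qed

lemma sigma_pos:
  assumes tr: "is_tree V E" and n4: "card V \<ge> 4"
  shows "sigma1 V E > 0"
proof -
  obtain S0 where "S0 \<in> nis1 V E" using exists_special[OF assms] by blast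
  moreover have "finite (nis1 V E)" using finN tr unfolding is_tree_def by blast
  ultimately show ?thesis unfolding sigma1_def using card_gt_0_iff by blast
qed

lemma av1_upper:
  assumes tr: "is_tree V E" and n4: "card V \<ge> 4"
  shows "av1 V E < (real (card V) + 1) / 2"
proof -
  have p: "real (sigma1 V E) > 0" using sigma_pos[OF assms] by simp
  have "real (S1 V E) < (real (card V) + 1) / 2 * real (sigma1 V E)"
    using main_ineq[OF assms] by simp
  then show ?thesis unfolding av1_def using p by (simp add: divide_less_eq)
qed



lemma R_eq: "R_edges n = insert {1,n-1} ((\<lambda>i. {0,i}) ` {1..n-2})"
proof -
  have "{{0, i} | i. 1 \<le> i \<and> i \<le> n - 2} = (\<lambda>i. {0::nat,i}) ` {i. 1 \<le> i \<and> i \<le> n - 2}"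
    by (rule setcompr_eq_image)
  also have "{i. 1 \<le> i \<and> i \<le> n - 2} = {1..n-2}" by auto
  finally show ?thesis unfolding R_edges_def by simp
qed

lemma nis1I:
  assumes "S \<subseteq> V" "e \<in> E" "e \<subseteq> S" "\<And>e'. e' \<in> E \<Longrightarrow> e' \<subseteq> S \<Longrightarrow> e' = e"
  shows "S \<in> nis1 V E"
proof -
  have "induced_edges E S = {e}" unfolding induced_edges_def
  proof (rule set_eqI)
    fix x show "x \<in> {e' \<in> E. e' \<subseteq> S} \<longleftrightarrow> x \<in> {e}" using assms(2-4) by blast
  qed
  then show ?thesis using assms(1) unfolding nis1_def by simp
qed

lemma R_tree:
  assumes n: "n > 8"
  shows "is_tree {0..<n} (R_edges n)"
proof -
  let ?E = "R_edges n"
  have sg: "simple_graph {0..<n} ?E"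
  proof -
    have "e \<subseteq> {0..<n} \<and> card e = 2" if "e \<in> ?E" for e
    proof -
      have "e = {1,n-1} \<or> (\<exists>i. 1 \<le> i \<and> i \<le> n-2 \<and> e = {0,i})" using that unfolding R_eq by (elim insertE imageE) (simp_all only: atLeastAtMost_iff, blast+)
      then show ?thesis
      proof
        assume "e = {1,n-1}" then show ?thesis using n by simp
      next
        assume "\<exists>i. 1 \<le> i \<and> i \<le> n-2 \<and> e = {0,i}"
        then obtain i where "1 \<le> i" "i \<le> n-2" "e = {0,i}" by blast
        then show ?thesis using n by simp
      qed
    qed
    then show ?thesis unfolding simple_graph_def by simp
  qed
  have inj: "inj_on (\<lambda>i. {0::nat,i}) {1..n-2}" by (auto simp: inj_on_def doubleton_eq_iff)
  have nin: "{1,n-1} \<notin> (\<lambda>i. {0::nat,i}) ` {1..n-2}" using n by (auto simp: doubleton_eq_iff)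
  have cE: "card ?E = n - 1" unfolding R_eq using card_image[OF inj] nin n by simp
  have sym: "adj ?E u v \<Longrightarrow> adj ?E v u" for u v unfolding adj_def by (simp add: insert_commute)
  have symr: "(adj ?E)\<^sup>*\<^sup>* v u" if "(adj ?E)\<^sup>*\<^sup>* u v" for u v
    using that
  proof (induction rule: rtranclp_induct)
    case base then show ?case by simp
  next
    case (step y z)
    then show ?case using sym by (meson converse_rtranclp_into_rtranclp)
  qed
  have from0: "(adj ?E)\<^sup>*\<^sup>* 0 v" if "v \<in> {0..<n}" for v
  proof -
    have a01: "adj ?E 0 1" unfolding adj_def R_eq
      by (rule insertI2, rule rev_image_eqI[of 1]) (use n in auto)
    have "v = 0 \<or> (1 \<le> v \<and> v \<le> n-2) \<or> v = n-1" using that by auto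
    then consider "v = 0" | "1 \<le> v \<and> v \<le> n-2" | "v = n-1" by blast
    then show ?thesis
    proof cases
      case 1 then show ?thesis by simp
    next
      case 2 then have "adj ?E 0 v" unfolding adj_def R_eq
        by (intro insertI2 rev_image_eqI[of v]) auto
      then show ?thesis by simp
    next
      case 3 then have "adj ?E 1 v" unfolding adj_def R_eq by simp
      then show ?thesis using a01 by (meson rtranclp.rtrancl_into_rtrancl r_into_rtranclp)
    qed
  qed
  have gc: "graph_connected {0..<n} ?E"
    unfolding graph_connected_def using from0 symr by (meson rtranclp_trans)
  show ?thesis unfolding is_tree_def using sg gc cE n by auto
qed



lemma nis1_fwd2:
  assumes "S \<in> nis1 V E"
  shows "S \<subseteq> V \<and> (\<exists>e. e \<in> E \<and> e \<subseteq> S \<and> (\<forall>e'. e' \<in> E \<longrightarrow> e' \<subseteq> S \<longrightarrow> e' = e))"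
proof -
  obtain e where ie: "induced_edges E S = {e}" using ie_single[OF assms] by (elim exE)
  have SV: "S \<subseteq> V" using assms unfolding nis1_def by simp
  have "e \<in> induced_edges E S" using ie by simp
  hence e: "e \<in> E" "e \<subseteq> S" unfolding induced_edges_def by simp_all
  have u: "e' = e" if "e' \<in> E" "e' \<subseteq> S" for e'
  proof -
    have "e' \<in> induced_edges E S" unfolding induced_edges_def using that by simp
    then show ?thesis using ie by simp
  qed
  show ?thesis
  proof (intro conjI exI[of _ e] allI impI)
    show "S \<subseteq> V" by (rule SV)
    show "e \<in> E" by (rule e(1))
    show "e \<subseteq> S" by (rule e(2))
    fix e' assume "e' \<in> E" "e' \<subseteq> S" then show "e' = e" by (rule u)
  qed
qed

lemma edgeR_cases:
  assumes "e \<in> R_edges n"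
  obtains "e = {1,n-1}" | i where "1 \<le> i" "i \<le> n-2" "e = {0,i}"
  using assms unfolding R_eq by (elim insertE imageE) (simp_all only: atLeastAtMost_iff, blast+)

lemma edge0R: "1 \<le> j \<Longrightarrow> j \<le> n-2 \<Longrightarrow> {0,j} \<in> R_edges n"
  unfolding R_eq by (intro insertI2 rev_image_eqI[of j]) auto

lemma edge1R: "{1,n-1} \<in> R_edges n"
  unfolding R_eq by simp

lemma d1: "(n::nat) > 8 \<Longrightarrow> {0::nat,j} \<noteq> {1,n-1}" by (simp add: doubleton_eq_iff)
lemma d2: "{0::nat,j} = {0,i} \<longleftrightarrow> j = i" by (auto simp: doubleton_eq_iff)

lemma R_char:
  assumes n: "n > 8"
  shows "nis1 {0..<n} (R_edges n) =
     (\<lambda>i. {0,i}) ` {2..n-2} \<union> (\<lambda>i. {0,i,n-1}) ` {2..n-2} \<union> {{0,1}} \<union> (\<lambda>A. {1,n-1} \<union> A) ` Pow {2..n-2}"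
    (is "?N = ?F1 \<union> ?F2 \<union> ?F3 \<union> ?F4")
proof (rule set_eqI, rule iffI)
  fix S assume "S \<in> ?N"
  hence fw: "S \<subseteq> {0..<n} \<and> (\<exists>e. e \<in> R_edges n \<and> e \<subseteq> S \<and> (\<forall>e'. e' \<in> R_edges n \<longrightarrow> e' \<subseteq> S \<longrightarrow> e' = e))"
    by (rule nis1_fwd2)
  hence SV: "S \<subseteq> {0..<n}" by (rule conjunct1)
  from fw obtain e where e: "e \<in> R_edges n" "e \<subseteq> S"
    and u0: "\<forall>e'. e' \<in> R_edges n \<longrightarrow> e' \<subseteq> S \<longrightarrow> e' = e" by (elim conjE exE)
  have u: "e' = e" if "e' \<in> R_edges n" "e' \<subseteq> S" for e' using u0 that by blast
  have U0: "{0,j} = e" if "1 \<le> j" "j \<le> n-2" "0 \<in> S" "j \<in> S" for j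
  proof -
    have "{0,j} \<subseteq> S" using that by simp
    then show ?thesis using u[OF edge0R[OF that(1,2)]] by simp
  qed
  have U1: "{1,n-1} = e" if "1 \<in> S" "n-1 \<in> S"
  proof -
    have "{1,n-1} \<subseteq> S" using that by simp
    then show ?thesis using u[OF edge1R] by simp
  qed
  have Sn: "x < n" if "x \<in> S" for x using SV that by auto
  from e(1) show "S \<in> ?F1 \<union> ?F2 \<union> ?F3 \<union> ?F4"
  proof (cases rule: edgeR_cases)
    case 1
    hence in1: "1 \<in> S" "n-1 \<in> S" using e(2) by simp_all
    have n0: "0 \<notin> S"
    proof
      assume "0 \<in> S"
      hence "{0,1} = e" using U0[of 1] in1 n by simp
      thus False using 1 d1[OF n, of 1] by simp
    qed
    have sub: "S - {1,n-1} \<subseteq> {2..n-2}"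
    proof
      fix x assume "x \<in> S - {1,n-1}"
      hence xS: "x \<in> S" and "x \<noteq> 1" "x \<noteq> n-1" by auto
      moreover have "x \<noteq> 0" using n0 xS by metis
      moreover have "x < n" using Sn \<open>x \<in> S\<close> by simp
      ultimately show "x \<in> {2..n-2}" by simp
    qed
    have "S = {1,n-1} \<union> (S - {1,n-1})" using in1 by auto
    hence "S \<in> ?F4" using sub by (intro rev_image_eqI[of "S - {1,n-1}"]) simp_all
    then show ?thesis by (rule UnI2)
  next
    case (2 i)
    hence in0: "0 \<in> S" "i \<in> S" using e(2) by simp_all
    have only: "j = i" if "1 \<le> j" "j \<le> n-2" "j \<in> S" for j
      using U0[OF that(1,2) in0(1) that(3)] 2 d2 by simp
    have not1n: "\<not> (1 \<in> S \<and> n-1 \<in> S)"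
    proof
      assume "1 \<in> S \<and> n-1 \<in> S"
      hence "{1,n-1} = {0,i}" using U1 2 by simp
      thus False using d1[OF n, of i] by simp
    qed
    show ?thesis
    proof (cases "i = 1")
      case True
      have "S = {0,1}"
      proof (rule set_eqI)
        fix x show "x \<in> S \<longleftrightarrow> x \<in> {0,1}"
        proof
          assume xS: "x \<in> S"
          have "x < n" using Sn xS by simp
          then have "x = 0 \<or> (1 \<le> x \<and> x \<le> n-2) \<or> x = n-1" by auto
          then show "x \<in> {0,1}" using only[of x] xS True not1n in0 by auto
        next
          assume "x \<in> {0,1}" then show "x \<in> S" using in0 True by auto
        qed
      qed
      then show ?thesis by simp
    next
      case False
      hence i2: "2 \<le> i" using 2 by simp
      have "1 \<le> n-2" using n by simp
      hence n1: "1 \<notin> S" using only[of 1] False by auto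
      have xc: "x = 0 \<or> x = i \<or> x = n-1" if xS: "x \<in> S" for x
      proof -
        have "x < n" using Sn xS by simp
        then have "x = 0 \<or> (1 \<le> x \<and> x \<le> n-2) \<or> x = n-1" by auto
        then show ?thesis using only[of x] xS by auto
      qed
      show ?thesis
      proof (cases "n-1 \<in> S")
        case True
        have "S = {0,i,n-1}"
          by (rule set_eqI) (use xc in0 True in auto)
        hence "S \<in> ?F2" using i2 2 by (intro rev_image_eqI[of i]) simp_all
        then show ?thesis by simp
      next
        case False
        have "S = {0,i}"
          by (rule set_eqI) (use xc in0 False in auto)
        hence "S \<in> ?F1" using i2 2 by (intro rev_image_eqI[of i]) simp_all
        then show ?thesis by simp
      qed
    qed
  qed
next
  fix S assume "S \<in> ?F1 \<union> ?F2 \<union> ?F3 \<union> ?F4"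
  then consider "S \<in> ?F1" | "S \<in> ?F2" | "S \<in> ?F3" | "S \<in> ?F4" by (elim UnE) blast+
  then show "S \<in> ?N"
  proof cases
    case 1
    then obtain i where i0: "i \<in> {2..n-2}" and S: "S = {0,i}" by (rule imageE)
    from i0 have i: "2 \<le> i" "i \<le> n-2" by simp_all
    show ?thesis unfolding S
    proof (rule nis1I[of _ _ "{0,i}"])
      show "{0,i} \<subseteq> {0..<n}" using i n by simp
      show "{0,i} \<in> R_edges n" using i by (intro edge0R) simp_all
      fix e' assume "e' \<in> R_edges n" "e' \<subseteq> {0,i}"
      then show "e' = {0,i}"
      proof (cases rule: edgeR_cases)
        case 1 then show ?thesis using \<open>e' \<subseteq> {0,i}\<close> i by simp
      next
        case (2 j) then show ?thesis using \<open>e' \<subseteq> {0,i}\<close> i by auto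
      qed
    qed simp
  next
    case 2
    then obtain i where i0: "i \<in> {2..n-2}" and S: "S = {0,i,n-1}" by (rule imageE)
    from i0 have i: "2 \<le> i" "i \<le> n-2" by simp_all
    show ?thesis unfolding S
    proof (rule nis1I[of _ _ "{0,i}"])
      show "{0,i,n-1} \<subseteq> {0..<n}" using i n by simp
      show "{0,i} \<in> R_edges n" using i by (intro edge0R) simp_all
      fix e' assume "e' \<in> R_edges n" "e' \<subseteq> {0,i,n-1}"
      then show "e' = {0,i}"
      proof (cases rule: edgeR_cases)
        case 1 then show ?thesis using \<open>e' \<subseteq> {0,i,n-1}\<close> i n by simp
      next
        case (2 j) then show ?thesis using \<open>e' \<subseteq> {0,i,n-1}\<close> i n by auto
      qed
    qed auto
  next
    case 3
    hence S: "S = {0,1}" by simp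
    show ?thesis unfolding S
    proof (rule nis1I[of _ _ "{0,1}"])
      show "{0,1} \<subseteq> {0..<n}" using n by simp
      show "{0::nat,1} \<in> R_edges n" using n by (intro edge0R) simp_all
      fix e' assume "e' \<in> R_edges n" "e' \<subseteq> {0,1}"
      then show "e' = {0,1}"
      proof (cases rule: edgeR_cases)
        case 1 then show ?thesis using \<open>e' \<subseteq> {0,1}\<close> n by simp
      next
        case (2 j) then show ?thesis using \<open>e' \<subseteq> {0,1}\<close> n by auto
      qed
    qed simp
  next
    case 4
    then obtain A where A0: "A \<in> Pow {2..n-2}" and S: "S = {1,n-1} \<union> A" by (rule imageE)
    from A0 have A: "A \<subseteq> {2..n-2}" by simp
    have n0: "0 \<notin> S" using A S n by auto
    show ?thesis
    proof (rule nis1I[of _ _ "{1,n-1}"])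
      show "S \<subseteq> {0..<n}" using A S n by (auto dest!: subsetD[OF A])
      show "{1,n-1} \<in> R_edges n" by (rule edge1R)
      show "{1,n-1} \<subseteq> S" using S by simp
      fix e' assume "e' \<in> R_edges n" "e' \<subseteq> S"
      then show "e' = {1,n-1}"
      proof (cases rule: edgeR_cases)
        case 1 then show ?thesis by simp
      next
        case (2 j) then show ?thesis using \<open>e' \<subseteq> S\<close> n0 by simp
      qed
    qed
  qed
qed



lemma pow_card_sum:
  assumes "finite L"
  shows "2 * (\<Sum>A\<in>Pow L. card A) = card L * 2 ^ card L"
proof -
  have bij: "bij_betw (\<lambda>A. L - A) (Pow L) (Pow L)"
    by (rule bij_betw_byWitness[where f' = "\<lambda>A. L - A"]) auto
  have "(\<Sum>A\<in>Pow L. card (L - A)) = (\<Sum>A\<in>Pow L. card A)"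
    using sum.reindex_bij_betw[OF bij, of card] by simp
  hence "2 * (\<Sum>A\<in>Pow L. card A) = (\<Sum>A\<in>Pow L. card A + card (L - A))"
    by (simp add: sum.distrib)
  also have "\<dots> = (\<Sum>A\<in>Pow L. card L)"
  proof (rule sum.cong)
    fix A assume "A \<in> Pow L"
    hence "A \<subseteq> L" by simp
    then show "card A + card (L - A) = card L" using assms
      by (metis card_Diff_subset finite_subset le_add_diff_inverse card_mono)
  qed simp
  also have "\<dots> = card L * 2 ^ card L" using assms by (simp add: card_Pow)
  finally show ?thesis .
qed

lemma disj_by: "(\<And>S. S \<in> A \<Longrightarrow> P S) \<Longrightarrow> (\<And>S. S \<in> B \<Longrightarrow> \<not> P S) \<Longrightarrow> A \<inter> B = {}"
  by blast

lemma R_counts: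
  assumes n: "n > 8"
  defines "L \<equiv> {2..n-2}"
  defines "F1 \<equiv> (\<lambda>i. {0,i}) ` L" and "F2 \<equiv> (\<lambda>i. {0,i,n-1}) ` L" and "F3 \<equiv> {{0::nat,1}}"
    and "F4 \<equiv> (\<lambda>A. {1,n-1} \<union> A) ` Pow L"
  shows "card (F1 \<union> F2 \<union> F3 \<union> F4) = 2*(n-3) + 1 + 2^(n-3)"
    "2 * (\<Sum>S\<in>F1 \<union> F2 \<union> F3 \<union> F4. card S) = 10*(n-3) + 4 + 4*2^(n-3) + (n-3)*2^(n-3)"
proof -
  have fL: "finite L" and cL: "card L = n-3" unfolding L_def using n by simp_all
  have inj1: "inj_on (\<lambda>i. {0::nat,i}) L" unfolding L_def inj_on_def by (auto simp: doubleton_eq_iff)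
  have inj2: "inj_on (\<lambda>i. {0::nat,i,n-1}) L" unfolding inj_on_def
  proof (intro ballI impI)
    fix i j assume ij: "i \<in> L" "j \<in> L" "{0,i,n-1} = {0::nat,j,n-1}"
    hence "i \<in> {0,j,n-1}" by (metis insertI1 insertI2)
    then show "i = j" using ij(1) n unfolding L_def by auto
  qed
  have inj4: "inj_on (\<lambda>A. {1,n-1} \<union> A) (Pow L)" unfolding inj_on_def
  proof (intro ballI impI)
    fix A B assume AB: "A \<in> Pow L" "B \<in> Pow L" "{1,n-1} \<union> A = {1,n-1} \<union> B"
    have "1 \<notin> L" "n-1 \<notin> L" unfolding L_def using n by auto
    hence "A = ({1,n-1} \<union> A) - {1,n-1}" "B = ({1,n-1} \<union> B) - {1,n-1}" using AB(1,2) by auto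
    then show "A = B" using AB(3) by metis
  qed
  have fF1: "finite F1" "finite F2" "finite F3" "finite F4" unfolding F1_def F2_def F3_def F4_def using fL by simp_all
  have d12: "F1 \<inter> F2 = {}"
    by (rule disj_by[where P = "\<lambda>S. n-1 \<notin> S"]) (use n in \<open>auto simp: F1_def F2_def L_def\<close>)
  have d3: "(F1 \<union> F2) \<inter> F3 = {}"
    by (rule disj_by[where P = "\<lambda>S. 1 \<notin> S"]) (use n in \<open>auto simp: F1_def F2_def F3_def L_def\<close>)
  have d4: "(F1 \<union> F2 \<union> F3) \<inter> F4 = {}"
    by (rule disj_by[where P = "\<lambda>S. 0 \<in> S"]) (use n in \<open>auto simp: F1_def F2_def F3_def F4_def L_def\<close>)
  have c1: "card F1 = n-3" unfolding F1_def using card_image[OF inj1] cL by simp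
  have c2: "card F2 = n-3" unfolding F2_def using card_image[OF inj2] cL by simp
  have c4: "card F4 = 2^(n-3)" unfolding F4_def using card_image[OF inj4] cL fL by (simp add: card_Pow)
  show "card (F1 \<union> F2 \<union> F3 \<union> F4) = 2*(n-3) + 1 + 2^(n-3)"
    using fF1 d12 d3 d4 c1 c2 c4 by (simp add: card_Un_disjoint F3_def)
  have s1: "(\<Sum>S\<in>F1. card S) = 2*(n-3)"
    unfolding F1_def sum.reindex[OF inj1] o_def using cL
    by (simp add: L_def)
  have s2: "(\<Sum>S\<in>F2. card S) = 3*(n-3)"
  proof -
    have "(\<Sum>S\<in>F2. card S) = (\<Sum>i\<in>L. card {0,i,n-1})"
      unfolding F2_def sum.reindex[OF inj2] o_def ..
    also have "\<dots> = (\<Sum>i\<in>L. 3)"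
    proof (rule sum.cong)
      fix i assume "i \<in> L"
      hence "i \<noteq> 0" "i \<noteq> n-1" "n - 1 \<noteq> 0" unfolding L_def using n by auto
      then show "card {0,i,n-1} = 3" by simp
    qed simp
    finally show ?thesis using cL by simp
  qed
  have s4: "2 * (\<Sum>S\<in>F4. card S) = 4*2^(n-3) + (n-3)*2^(n-3)"
  proof -
    have "(\<Sum>S\<in>F4. card S) = (\<Sum>A\<in>Pow L. card ({1,n-1} \<union> A))"
      unfolding F4_def sum.reindex[OF inj4] o_def ..
    also have "\<dots> = (\<Sum>A\<in>Pow L. 2 + card A)"
    proof (rule sum.cong)
      fix A assume "A \<in> Pow L"
      hence "A \<subseteq> L" by simp
      moreover have "1 \<notin> L" "n-1 \<notin> L" unfolding L_def using n by auto
      ultimately have "{1,n-1} \<inter> A = {}" by auto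
      moreover have "finite A" using \<open>A \<subseteq> L\<close> fL finite_subset by blast
      ultimately show "card ({1,n-1} \<union> A) = 2 + card A" using n by (simp add: card_Un_disjoint)
    qed simp
    also have "\<dots> = 2 * 2^(n-3) + (\<Sum>A\<in>Pow L. card A)"
      using fL cL by (simp only: sum.distrib sum_constant card_Pow) simp
    finally show ?thesis using pow_card_sum[OF fL] cL by simp
  qed
  have s3: "(\<Sum>S\<in>F3. card S) = 2" unfolding F3_def by simp
  have "(\<Sum>S\<in>F1 \<union> F2 \<union> F3 \<union> F4. card S) = (\<Sum>S\<in>F1. card S) + (\<Sum>S\<in>F2. card S) + (\<Sum>S\<in>F3. card S) + (\<Sum>S\<in>F4. card S)"
    using fF1 d12 d3 d4 by (simp add: sum.union_disjoint)
  then show "2 * (\<Sum>S\<in>F1 \<union> F2 \<union> F3 \<union> F4. card S) = 10*(n-3) + 4 + 4*2^(n-3) + (n-3)*2^(n-3)"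
    using s1 s2 s3 s4 by simp
qed



lemma cube_le_pow: "k \<ge> 10 \<Longrightarrow> k^3 \<le> (2::nat)^k"
proof (induction k rule: nat_induct_at_least)
  case base then show ?case by simp
next
  case (Suc k)
  have a: "10 * (k*k) \<le> k * (k*k)" using Suc(1) by (intro mult_le_mono1)
  have "(Suc k)^3 = k*(k*k) + 3*(k*k) + 3*k + 1" by (simp add: power3_eq_cube algebra_simps)
  also have "\<dots> \<le> 2 * (k*(k*k))"
  proof -
    have b: "10 * k \<le> k * k" using Suc(1) by (intro mult_le_mono1)
    show ?thesis using a b Suc(1) by linarith
  qed
  also have "\<dots> \<le> 2 * 2^k" using Suc(2) by (simp add: power3_eq_cube)
  finally show ?case by simp
qed

lemma sq_lt_pow: "m \<ge> 6 \<Longrightarrow> 2*m^2 < (2::nat)^m + 3*m + 1"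
proof (induction m rule: nat_induct_at_least)
  case base then show ?case by simp
next
  case (Suc m)
  have a: "6 * m \<le> m * m" using Suc(1) by (intro mult_le_mono1)
  have "2 * (Suc m)^2 = 2*m^2 + 4*m + 2" by (simp add: power2_eq_square algebra_simps)
  also have "\<dots> < 2^(Suc m) + 3 * Suc m + 1"
  proof -
    have IH: "2*(m*m) < 2^m + 3*m + 1" using Suc(2) by (simp add: power2_eq_square)
    have e: "(2::nat)^(Suc m) = 2 * 2^m" by simp
    show ?thesis unfolding e power2_eq_square using IH a Suc(1) by linarith
  qed
  finally show ?case .
qed


lemma R_values:
  assumes n: "n > 8"
  shows "sigma1 {0..<n} (R_edges n) = 2*(n-3) + 1 + 2^(n-3)"
    "2 * S1 {0..<n} (R_edges n) = 10*(n-3) + 4 + 4*2^(n-3) + (n-3)*2^(n-3)"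
  unfolding sigma1_def S1_def R_char[OF n] using R_counts[OF n] by simp_all

lemma R_real:
  assumes n: "n > 8"
  defines "m \<equiv> real (n-3)"
  shows "real (sigma1 {0..<n} (R_edges n)) = 2*m + 1 + 2^(n-3)"
    "2 * real (S1 {0..<n} (R_edges n)) = 10*m + 4 + 4*2^(n-3) + m*2^(n-3)"
    "real n = m + 3"
proof -
  show "real (sigma1 {0..<n} (R_edges n)) = 2*m + 1 + 2^(n-3)"
    unfolding m_def R_values(1)[OF n] by simp
  have "real (2 * S1 {0..<n} (R_edges n)) = real (10*(n-3) + 4 + 4*2^(n-3) + (n-3)*2^(n-3))"
    using R_values(2)[OF n] by metis
  then show "2 * real (S1 {0..<n} (R_edges n)) = 10*m + 4 + 4*2^(n-3) + m*2^(n-3)"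
    unfolding m_def by simp
  show "real n = m + 3" unfolding m_def using n by simp
qed

lemma R_diff:
  assumes n: "n > 8"
  defines "m \<equiv> real (n-3)"
  shows "av1 {0..<n} (R_edges n) - (real n + 1)/2 = (m - 2*m^2) / (2*(2*m+1+2^(n-3)))"
    "real n / 2 < av1 {0..<n} (R_edges n)"
    "av1 {0..<n} (R_edges n) < (real n + 1)/2"
proof -
  let ?P = "(2::real)^(n-3)"
  note R = R_real[OF n, folded m_def]
  have P: "?P > 0" by simp
  have m0: "m \<ge> 6" unfolding m_def using n by simp
  have D: "2*m + 1 + ?P > 0" using m0 P by linarith
  have av: "av1 {0..<n} (R_edges n) = (10*m + 4 + 4*?P + m*?P) / (2*(2*m + 1 + ?P))"
    unfolding av1_def using R(1,2) by (metis mult.commute divide_divide_eq_left' nonzero_mult_div_cancel_left times_divide_eq_right zero_neq_numeral)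
  show "av1 {0..<n} (R_edges n) - (real n + 1)/2 = (m - 2*m^2) / (2*(2*m+1+?P))"
    unfolding av R(3) using D by (simp add: field_simps power2_eq_square)
  have sq: "2*(n-3)^2 < 2^(n-3) + 3*(n-3) + (1::nat)" using n by (intro sq_lt_pow) simp
  have sqr: "2*m^2 < ?P + 3*m + 1"
  proof -
    have "real (2*(n-3)^2) < real (2^(n-3) + 3*(n-3) + (1::nat))" using sq by (simp only: of_nat_less_iff)
    then show ?thesis unfolding m_def by simp
  qed
  show "real n / 2 < av1 {0..<n} (R_edges n)"
    unfolding av R(3) using D sqr by (simp add: field_simps power2_eq_square)
  show "av1 {0..<n} (R_edges n) < (real n + 1)/2"
    unfolding av R(3) using D m0 by (simp add: field_simps power2_eq_square)
qed


lemma g_bounds: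
  fixes k :: nat assumes k: "k \<ge> 10"
  shows "-1 / real k \<le> (real k - 2*real k^2)/(2*(2*real k+1+2^k))"
    "(real k - 2*real k^2)/(2*(2*real k+1+2^k)) \<le> 0"
proof -
  have c: "real k^3 \<le> 2^k"
  proof -
    have "real (k^3) \<le> real ((2::nat)^k)" using cube_le_pow[OF k] by (simp only: of_nat_le_iff)
    then show ?thesis by simp
  qed
  have k1: "real k \<ge> 10" using k by simp
  have P: "(2::real)^k > 0" by simp
  have D: "2*(2*real k+1+2^k) > 0" using P k1 by (intro mult_pos_pos add_pos_pos) auto
  have num: "real k - 2*real k^2 \<le> 0" using k1 by (simp add: power2_eq_square)
  show "(real k - 2*real k^2)/(2*(2*real k+1+2^k)) \<le> 0"
    using num D by (simp add: divide_nonpos_pos)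
  have "-1 / real k * (2*(2*real k+1+2^k)) \<le> real k - 2*real k^2"
  proof -
    have "-1 / real k * (2*(2*real k+1+2^k)) = -(4 + 2/real k + 2*2^k/real k)"
      using k1 by (simp add: field_simps)
    also have "\<dots> \<le> -(2*2^k/real k)"
    proof -
      have "2/real k \<ge> 0" using k1 by simp
      then show ?thesis by linarith
    qed
    also have "2*2^k/real k \<ge> 2*real k^2"
    proof -
      have "2*real k^2 * real k = 2*real k^3" by (simp add: power2_eq_square power3_eq_cube)
      also have "\<dots> \<le> 2*2^k" using c by simp
      finally show ?thesis using k1 by (simp add: le_divide_eq)
    qed
    hence "-(2*2^k/real k) \<le> -(2*real k^2)" by simp
    also have "\<dots> \<le> real k - 2*real k^2" by simp
    finally show ?thesis .
  qed
  then show "-1 / real k \<le> (real k - 2*real k^2)/(2*(2*real k+1+2^k))"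
    using D by (simp add: le_divide_eq)
qed

lemma g_lim: "(\<lambda>k::nat. (real k - 2*real k^2)/(2*(2*real k+1+2^k))) \<longlonglongrightarrow> 0"
proof (rule tendsto_sandwich[where f = "\<lambda>k. -1 / real k" and h = "\<lambda>k. 0"])
  show "\<forall>\<^sub>F k in sequentially. -1 / real k \<le> (real k - 2*real k^2)/(2*(2*real k+1+2^k))"
    using g_bounds(1) eventually_sequentially by blast
  show "\<forall>\<^sub>F k in sequentially. (real k - 2*real k^2)/(2*(2*real k+1+2^k)) \<le> 0"
    using g_bounds(2) eventually_sequentially by blast
  show "(\<lambda>k. -1 / real k) \<longlonglongrightarrow> 0" by (rule lim_const_over_n)
qed simp

lemma R_lim: "(\<lambda>n. av1 {0..<n} (R_edges n) - (real n + 1) / 2) \<longlonglongrightarrow> 0"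
proof (rule LIMSEQ_offset[where k = 9])
  let ?g = "\<lambda>k::nat. (real k - 2*real k^2)/(2*(2*real k+1+2^k))"
  have "(\<lambda>n. ?g (n + 6)) \<longlonglongrightarrow> 0" by (rule LIMSEQ_ignore_initial_segment[OF g_lim])
  moreover have "av1 {0..<n+9} (R_edges (n+9)) - (real (n+9) + 1) / 2 = ?g (n + 6)" for n
    using R_diff(1)[of "n+9"] by (simp add: numeral_eq_Suc)
  ultimately show "(\<lambda>n. av1 {0..<n+9} (R_edges (n+9)) - (real (n+9) + 1) / 2) \<longlonglongrightarrow> 0" by simp
qed


lemma trees_fin: "finite {E. is_tree {0..<n::nat} E}"
proof (rule finite_subset)
  show "{E. is_tree {0..<n} E} \<subseteq> Pow (Pow {0..<n})"
  proof (rule subsetI)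
    fix E assume "E \<in> {E. is_tree {0..<n} E}"
    hence sg: "simple_graph {0..<n} E" by (simp add: is_tree_def)
    show "E \<in> Pow (Pow {0..<n})"
    proof (simp only: Pow_iff, rule subsetI)
      fix e assume "e \<in> E" then show "e \<in> Pow {0..<n}" using sg unfolding simple_graph_def by simp
    qed
  qed
qed simp

lemma M_bounds:
  assumes n: "n > 8"
  shows "av1 {0..<n} (R_edges n) \<le> M n" "M n < (real n + 1) / 2"
proof -
  let ?A = "av1 {0..<n} ` {E. is_tree {0..<n} E}"
  have fA: "finite ?A" using trees_fin by simp
  have RA: "av1 {0..<n} (R_edges n) \<in> ?A" using R_tree[OF n] by simp
  show "av1 {0..<n} (R_edges n) \<le> M n" unfolding M_def using fA RA by (rule Max_ge)
  have ne: "?A \<noteq> {}" using RA by blast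
  have "\<forall>a\<in>?A. a < (real n + 1) / 2"
  proof
    fix a assume "a \<in> ?A"
    then obtain E where E: "is_tree {0..<n} E" and a: "a = av1 {0..<n} E" by blast
    have "card {0..<n} \<ge> 4" using n by simp
    then show "a < (real n + 1) / 2" using av1_upper[OF E] a by simp
  qed
  then show "M n < (real n + 1) / 2" unfolding M_def using Max_less_iff[OF fA ne] by blast
qed

theorem mainTheorem13:
  shows "(\<forall>n::nat. n > 8 \<longrightarrow>
            (\<exists>\<delta>::real. M n = real n / 2 + \<delta> \<and> 0 < \<delta> \<and> \<delta> < 1/2))
       \<and> (\<lambda>n. M n - (real n + 1) / 2) \<longlonglongrightarrow> 0
       \<and> (\<forall>n::nat. n > 8 \<longrightarrow>
            is_tree {0..<n} (R_edges n)
            \<and> real n / 2 < av1 {0..<n} (R_edges n)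
            \<and> av1 {0..<n} (R_edges n) < (real n + 1) / 2)
       \<and> (\<lambda>n. av1 {0..<n} (R_edges n) - (real n + 1) / 2) \<longlonglongrightarrow> 0"
proof (intro conjI allI impI)
  fix n :: nat assume n: "n > 8"
  have a: "real n / 2 < M n" using R_diff(2)[OF n] M_bounds(1)[OF n] by linarith
  have b: "M n < (real n + 1) / 2" using M_bounds(2)[OF n] .
  show "\<exists>\<delta>::real. M n = real n / 2 + \<delta> \<and> 0 < \<delta> \<and> \<delta> < 1/2"
    by (rule exI[of _ "M n - real n / 2"]) (use a b in \<open>simp add: field_simps\<close>)
next
  show "(\<lambda>n. M n - (real n + 1) / 2) \<longlonglongrightarrow> 0"
  proof (rule tendsto_sandwich[where f = "\<lambda>n. av1 {0..<n} (R_edges n) - (real n + 1) / 2" and h = "\<lambda>n. 0"])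
    show "\<forall>\<^sub>F n in sequentially. av1 {0..<n} (R_edges n) - (real n + 1) / 2 \<le> M n - (real n + 1) / 2"
      using eventually_gt_at_top[of 8] by eventually_elim (use M_bounds in simp)
    show "\<forall>\<^sub>F n in sequentially. M n - (real n + 1) / 2 \<le> 0"
      using eventually_gt_at_top[of 8] by eventually_elim (use M_bounds in force)
  qed (simp_all add: R_lim)
next
  fix n :: nat assume n: "n > 8"
  show "is_tree {0..<n} (R_edges n)" by (rule R_tree[OF n])
  show "real n / 2 < av1 {0..<n} (R_edges n)" by (rule R_diff(2)[OF n])
  show "av1 {0..<n} (R_edges n) < (real n + 1) / 2" by (rule R_diff(3)[OF n])
next
  show "(\<lambda>n. av1 {0..<n} (R_edges n) - (real n + 1) / 2) \<longlonglongrightarrow> 0" by (rule R_lim)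
qed


end
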